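(* For every fixed integer $m\ge2$, the limit $\tau_m^{**}:=\lim_{n\to\infty}n^{m/2}\tau_{n,n-m}$ exists and $$\tau_m^{**}=2^{-m}\,|H_m(x_m')|,$$ where $H_m$ is the Hermite polynomial of degree $m$ (orthogonal with respect to $e^{-x^2}$ on $\mathbb{R}$, normalized with leading coefficient $2^m$) and $x_m'$ is the largest zero of $H_m'$, i.e. the point of the rightmost local extremum of $H_m$.
   Context: $T_n$ denotes the Chebyshev polynomial of the first kind of degree $n$, $T_n(\cos\theta)=\cos n\theta$. For integers $n\ge k+2$, $k\ge 1$, let $\omega_{n,k}$ be the rightmost (largest) zero of $T_n^{(k+1)}$ and define $\tau_{n,k}:=|T_n^{(k)}(\omega_{n,k})|/T_n^{(k)}(1)$. *)

theory Defs
  imports "HOL-Analysis.Analysis" "HOL-Computational_Algebra.Polynomial"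
begin

fun chebT :: "nat \<Rightarrow> real poly" where
  "chebT 0 = 1"
| "chebT (Suc 0) = [:0, 1:]"
| "chebT (Suc (Suc n)) = [:0, 2:] * chebT (Suc n) - chebT n"

fun hermite :: "nat \<Rightarrow> real poly" where
  "hermite 0 = 1"
| "hermite (Suc 0) = [:0, 2:]"
| "hermite (Suc (Suc n)) = [:0, 2:] * hermite (Suc n) - smult (2 * real (Suc n)) (hermite n)"

definition pder :: "nat \<Rightarrow> real poly \<Rightarrow> real poly" where
  "pder k p = (pderiv ^^ k) p"

definition cheb_omega :: "nat \<Rightarrow> nat \<Rightarrow> real" where
  "cheb_omega n k = Max {x. poly (pder (k + 1) (chebT n)) x = 0}"

definition cheb_tau :: "nat \<Rightarrow> nat \<Rightarrow> real" where
  "cheb_tau n k = \<bar>poly (pder k (chebT n)) (cheb_omega n k)\<bar> / poly (pder k (chebT n)) 1"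

definition hermite_xprime :: "nat \<Rightarrow> real" where
  "hermite_xprime m = Max {x. poly (pderiv (hermite m)) x = 0}"

end

theory Submission
  imports Defs
begin


lemma hermite_pderiv: "pderiv (hermite (Suc n)) = smult (2 * real (Suc n)) (hermite n)"
proof (induction n rule: less_induct)
  case (less n)
  show ?case
  proof (cases n)
    case 0 then show ?thesis by (simp add: pderiv_pCons)
  next
    case (Suc n') note n = this
    show ?thesis
    proof (cases n')
      case 0 then show ?thesis using n
        by (simp add: pderiv_pCons pderiv_mult pderiv_smult pderiv_diff)
    next
      case (Suc n'')
      have ih1: "pderiv (hermite (Suc n')) = smult (2 * real (Suc n')) (hermite n')" using less n by simp
      have ih2: "pderiv (hermite n') = smult (2 * real n') (hermite n'')" using less n Suc by simp
      have rec: "hermite (Suc n') = [:0,2:] * hermite n' - smult (2 * real n') (hermite n'')"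
        using Suc by simp
      have rec2: "hermite (Suc n) = [:0,2:] * hermite (Suc n') - smult (2 * real (Suc n')) (hermite n')"
        using n by simp
      have "pderiv (hermite (Suc n)) = [:0,2:] * pderiv (hermite (Suc n')) + smult 2 (hermite (Suc n'))
              - smult (2 * real (Suc n')) (pderiv (hermite n'))"
        unfolding rec2 by (simp add: pderiv_mult pderiv_smult pderiv_diff pderiv_pCons algebra_simps del: hermite.simps)
      also have "\<dots> = smult (2 * real (Suc n')) ([:0,2:] * hermite n' - smult (2 * real n') (hermite n''))
              + smult 2 (hermite (Suc n'))"
        unfolding ih1 ih2 by (simp add: algebra_simps smult_diff_right del: hermite.simps)
      also have "\<dots> = smult (2 * real (Suc n')) (hermite (Suc n')) + smult 2 (hermite (Suc n'))"
        unfolding rec ..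
      also have "\<dots> = smult (2 * real (Suc n)) (hermite (Suc n'))"
        using n by (simp add: smult_add_left[symmetric] del: hermite.simps)
      finally show ?thesis using n by simp
    qed
  qed
qed

lemma hermite_ode: "pderiv (pderiv (hermite n)) - [:0,2:] * pderiv (hermite n) + smult (2*real n) (hermite n) = 0"
proof (cases n)
  case 0 then show ?thesis by simp
next
  case (Suc j) note n = this
  show ?thesis
  proof (cases j)
    case 0 then show ?thesis using n by (simp add: pderiv_pCons)
  next
    case (Suc l)
    have d1: "pderiv (hermite n) = smult (2*real n) (hermite j)" using n hermite_pderiv by simp
    have d2: "pderiv (hermite j) = smult (2*real j) (hermite l)" using Suc hermite_pderiv by simp
    have rec: "hermite n = [:0,2:] * hermite j - smult (2 * real j) (hermite l)"
      using n Suc by simp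
    show ?thesis unfolding d1 pderiv_smult d2
      by (subst rec) (simp add: algebra_simps smult_diff_right n del: hermite.simps)
  qed
qed

lemma coeff_linmult: "coeff ([:0, c:] * p) i = (if i = 0 then 0 else c * coeff p (i - 1))"
  by (cases i) (simp_all add: coeff_pCons)

lemma hermite_coeff_rec:
  "real (Suc i) * real (Suc (Suc i)) * coeff (hermite n) (Suc (Suc i))
     = 2 * (real i - real n) * coeff (hermite n) i"
proof -
  have "coeff (pderiv (pderiv (hermite n)) - [:0,2:] * pderiv (hermite n) + smult (2*real n) (hermite n)) i = 0"
    by (simp only: hermite_ode coeff_0)
  then have "coeff (pderiv (pderiv (hermite n))) i - coeff ([:0,2:] * pderiv (hermite n)) i + 2 * real n * coeff (hermite n) i = 0"
    by (simp only: coeff_add coeff_diff coeff_smult)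
  moreover have "coeff ([:0,2:] * pderiv (hermite n)) i = 2 * real i * coeff (hermite n) i"
    by (cases i) (simp_all add: coeff_linmult coeff_pderiv)
  moreover have "coeff (pderiv (pderiv (hermite n))) i = real (Suc i) * real (Suc (Suc i)) * coeff (hermite n) (Suc (Suc i))"
    by (simp add: coeff_pderiv algebra_simps)
  ultimately show ?thesis by (simp add: algebra_simps)
qed

lemma hermite_no_common_root: "poly (hermite n) x = 0 \<Longrightarrow> poly (hermite (Suc n)) x = 0 \<Longrightarrow> False"
proof (induction n)
  case 0 then show ?case by simp
next
  case (Suc n)
  have "poly (hermite (Suc (Suc n))) x = 2 * x * poly (hermite (Suc n)) x - 2 * real (Suc n) * poly (hermite n) x"
    by simp
  with Suc.prems have "2 * real (Suc n) * poly (hermite n) x = 0" by (simp del: hermite.simps)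
  then have "poly (hermite n) x = 0" by simp
  with Suc.IH Suc.prems show ?case by blast
qed

lemma hermite_coeff_high: "n < i \<Longrightarrow> coeff (hermite n) i = 0"
proof (induction n arbitrary: i rule: hermite.induct)
  case 1 then show ?case by simp
next
  case 2 then show ?case by (auto simp: coeff_pCons split: nat.splits)
next
  case (3 n)
  obtain i' where i: "i = Suc i'" using 3 by (cases i) auto
  have "coeff (hermite (Suc (Suc n))) i = 2 * coeff (hermite (Suc n)) i' - 2 * real (Suc n) * coeff (hermite n) i"
    by (simp only: hermite.simps) (simp add: i del: hermite.simps)
  also have "\<dots> = 0" using 3 i by simp
  finally show ?case .
qed

lemma hermite_coeff_top: "coeff (hermite n) n = 2^n"
proof (induction n rule: hermite.induct)
  case 1 then show ?case by simp
next
  case 2 then show ?case by simp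
next
  case (3 n)
  have "coeff (hermite (Suc (Suc n))) (Suc (Suc n)) = 2 * coeff (hermite (Suc n)) (Suc n) - 2 * real (Suc n) * coeff (hermite n) (Suc (Suc n))"
    by (simp only: hermite.simps) (simp del: hermite.simps)
  also have "\<dots> = 2 ^ Suc (Suc n)" using 3 hermite_coeff_high[of n "Suc (Suc n)"] by simp
  finally show ?case .
qed

lemma hermite_degree: "degree (hermite n) = n"
  by (metis degree_le hermite_coeff_high hermite_coeff_top le_antisym le_degree power_not_zero zero_neq_numeral)

lemma hermite_lead: "lead_coeff (hermite n) = 2^n"
  using hermite_degree hermite_coeff_top by simp

lemma pos_beyond:
  fixes p :: "real poly"
  assumes lc: "lead_coeff p > 0" and rt: "\<forall>y. poly p y = 0 \<longrightarrow> y \<le> r" and ry: "r < y"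
  shows "poly p y > 0"
proof (rule ccontr)
  assume neg: "\<not> poly p y > 0"
  obtain N where N: "\<forall>x\<ge>N. lead_coeff p \<le> poly p x" using poly_pinfty_gt_lc[OF lc] by blast
  define Y where "Y = max N (y + 1)"
  have pY: "poly p Y > 0" using N[rule_format, of Y] lc unfolding Y_def by simp
  have yY: "y < Y" unfolding Y_def by simp
  show False
  proof (cases "poly p y = 0")
    case True then show False using rt ry by force
  next
    case False
    then have "poly p y < 0" using neg by simp
    from poly_IVT_pos[OF yY this pY] obtain x where "x > y" "poly p x = 0" by blast
    then show False using rt ry by force
  qed
qed

lemma deriv_nonneg_maxroot:
  fixes p :: "real poly"
  assumes "poly p r = 0" "\<forall>y>r. poly p y > 0"
  shows "poly (pderiv p) r \<ge> 0"
proof (rule ccontr)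
  assume "\<not> poly (pderiv p) r \<ge> 0"
  then have "poly (pderiv p) r < 0" by simp
  from DERIV_neg_dec_right[OF poly_DERIV this] obtain d where d: "d > 0" "\<forall>h>0. h < d \<longrightarrow> poly p (r + h) < poly p r" by blast
  then have "poly p (r + d/2) < 0" using assms(1) by auto
  moreover have "poly p (r + d/2) > 0" using assms(2) d by auto
  ultimately show False by simp
qed

lemma hermite_nonzero: "hermite n \<noteq> 0"
  using hermite_coeff_top[of n] by auto

lemma hermite_has_root: "1 \<le> n \<Longrightarrow> \<exists>x. poly (hermite n) x = 0"
proof (induction n rule: nat_induct_at_least)
  case base then show ?case by (intro exI[of _ 0]) simp
next
  case (Suc n)
  obtain j where n: "n = Suc j" using Suc.hyps by (cases n) auto
  define S where "S = {x. poly (hermite n) x = 0}"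
  have fin: "finite S" unfolding S_def by (rule poly_roots_finite[OF hermite_nonzero])
  have ne: "S \<noteq> {}" using Suc.IH unfolding S_def by auto
  define r where "r = Max S"
  have rS: "poly (hermite n) r = 0" using Max_in[OF fin ne] unfolding r_def S_def by simp
  have rmax: "\<forall>y. poly (hermite n) y = 0 \<longrightarrow> y \<le> r" using Max_ge[OF fin] unfolding r_def S_def by simp
  have pos: "\<forall>y>r. poly (hermite n) y > 0"
    using pos_beyond[OF _ rmax] hermite_lead by simp
  have d0: "poly (pderiv (hermite n)) r \<ge> 0" by (rule deriv_nonneg_maxroot[OF rS pos])
  have dn: "pderiv (hermite n) = smult (2 * real n) (hermite j)" using n hermite_pderiv by simp
  have "poly (hermite j) r \<noteq> 0" using hermite_no_common_root[of j r] rS n by auto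
  then have d1: "poly (pderiv (hermite n)) r > 0" using d0 dn n
    by (simp add: zero_le_mult_iff zero_less_mult_iff)
  have "poly (hermite (Suc n)) r = 2 * r * poly (hermite n) r - 2 * real n * poly (hermite j) r"
    using n by simp
  also have "\<dots> = - poly (pderiv (hermite n)) r" using rS dn by simp
  finally have neg: "poly (hermite (Suc n)) r < 0" using d1 by simp
  obtain N where N: "\<forall>x\<ge>N. lead_coeff (hermite (Suc n)) \<le> poly (hermite (Suc n)) x"
    using poly_pinfty_gt_lc[of "hermite (Suc n)"] hermite_lead by auto
  define Y where "Y = max N (r + 1)"
  have "poly (hermite (Suc n)) Y > 0" using N hermite_lead[of "Suc n"] unfolding Y_def
    by (metis max.cobounded1 order_less_le_trans zero_less_numeral zero_less_power)
  moreover have "r < Y" unfolding Y_def by simp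
  ultimately show ?case using poly_IVT_pos[OF _ neg] by blast
qed

lemma chebT_cos: "poly (chebT n) (cos t) = cos (real n * t)"
proof (induction n rule: chebT.induct)
  case 1 then show ?case by simp
next
  case 2 then show ?case by simp
next
  case (3 n)
  have "cos (real (Suc (Suc n)) * t) = cos ((real (Suc n)) * t + t)" by (simp add: algebra_simps)
  also have "\<dots> = 2 * cos t * cos (real (Suc n) * t) - cos (real (Suc n) * t - t)"
    by (simp add: cos_add cos_diff)
  also have "real (Suc n) * t - t = real n * t" by (simp add: algebra_simps)
  finally show ?case using 3 by simp
qed

lemma chebT_ode0:
  "[:1,0,-1:] * pderiv (pderiv (chebT n)) - [:0,1:] * pderiv (chebT n) + smult (real n ^ 2) (chebT n) = 0"
  (is "?E = 0")
proof -
  let ?T = "chebT n"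
  have d1: "DERIV (\<lambda>t. poly ?T (cos t)) t :> poly (pderiv ?T) (cos t) * (- sin t)" for t
    by (rule DERIV_chain2[OF poly_DERIV DERIV_cos])
  have d1': "DERIV (\<lambda>t. poly ?T (cos t)) t :> - sin (real n * t) * real n" for t
  proof -
    have "DERIV (\<lambda>t. cos (real n * t)) t :> - sin (real n * t) * real n"
      by (auto intro!: derivative_eq_intros)
    then show ?thesis by (simp add: chebT_cos)
  qed
  have eq1: "(\<lambda>t. poly (pderiv ?T) (cos t) * (- sin t)) = (\<lambda>t. - sin (real n * t) * real n)"
    using DERIV_unique[OF d1 d1'] by blast
  have d2: "DERIV (\<lambda>t. poly (pderiv ?T) (cos t) * (- sin t)) t :>
      poly (pderiv (pderiv ?T)) (cos t) * (- sin t) * (- sin t) + poly (pderiv ?T) (cos t) * (- cos t)" for t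
  proof -
    have a: "DERIV (\<lambda>t. poly (pderiv ?T) (cos t)) t :> poly (pderiv (pderiv ?T)) (cos t) * (- sin t)"
      by (rule DERIV_chain2[OF poly_DERIV DERIV_cos])
    have b: "DERIV (\<lambda>t. - sin t) t :> - cos t" by (auto intro!: derivative_eq_intros)
    from DERIV_mult[OF a b] show ?thesis by (simp add: algebra_simps)
  qed
  have d2': "DERIV (\<lambda>t. poly (pderiv ?T) (cos t) * (- sin t)) t :> - (cos (real n * t) * real n) * real n" for t
  proof -
    show ?thesis unfolding eq1 by (auto intro!: derivative_eq_intros)
  qed
  have key: "poly ?E (cos t) = 0" for t
  proof -
    have "poly (pderiv (pderiv ?T)) (cos t) * (- sin t) * (- sin t) + poly (pderiv ?T) (cos t) * (- cos t)
          = - (cos (real n * t) * real n) * real n"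
      using DERIV_unique[OF d2 d2'] .
    moreover have "sin t * (sin t * poly (pderiv (pderiv ?T)) (cos t)) = poly (pderiv (pderiv ?T)) (cos t) - cos t * (cos t * poly (pderiv (pderiv ?T)) (cos t))"
    proof -
      have "poly (pderiv (pderiv ?T)) (cos t) = (cos t * cos t + sin t * sin t) * poly (pderiv (pderiv ?T)) (cos t)"
        by (simp add: sin_cos_squared_add3)
      moreover have "(cos t * cos t + sin t * sin t) * poly (pderiv (pderiv ?T)) (cos t)
         = cos t * (cos t * poly (pderiv (pderiv ?T)) (cos t)) + sin t * (sin t * poly (pderiv (pderiv ?T)) (cos t))"
        by (simp only: distrib_right mult.assoc)
      ultimately show ?thesis by linarith
    qed
    ultimately have "poly (pderiv (pderiv ?T)) (cos t) - cos t * (cos t * poly (pderiv (pderiv ?T)) (cos t))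
       - cos t * poly (pderiv ?T) (cos t) + real n ^ 2 * cos (real n * t) = 0"
      by (simp add: algebra_simps power2_eq_square)
    then show ?thesis
      by (simp add: chebT_cos algebra_simps power2_eq_square)
  qed
  have "{-1..1::real} \<subseteq> {x. poly ?E x = 0}"
  proof
    fix x :: real assume "x \<in> {-1..1}"
    then have "cos (arccos x) = x" by (simp add: cos_arccos)
    then show "x \<in> {x. poly ?E x = 0}" using key[of "arccos x"] by simp
  qed
  moreover have "infinite {-1..1::real}" by (rule infinite_Icc) simp
  ultimately have "infinite {x. poly ?E x = 0}"
    using finite_subset[of "{-1..1::real}" "{x. poly ?E x = 0}"] by blast
  then show ?thesis using poly_roots_finite by blast
qed

lemma chebT_coeff_high: "n < i \<Longrightarrow> coeff (chebT n) i = 0"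
proof (induction n arbitrary: i rule: chebT.induct)
  case 1 then show ?case by simp
next
  case 2 then show ?case by (auto simp: coeff_pCons split: nat.splits)
next
  case (3 n)
  obtain i' where i: "i = Suc i'" using 3 by (cases i) auto
  have "coeff (chebT (Suc (Suc n))) i = 2 * coeff (chebT (Suc n)) i' - coeff (chebT n) i"
    by (simp only: chebT.simps) (simp add: i del: chebT.simps)
  also have "\<dots> = 0" using 3 i by simp
  finally show ?case .
qed

lemma chebT_coeff_top: "coeff (chebT (Suc n)) (Suc n) = 2^n"
proof (induction n rule: less_induct)
  case (less n)
  show ?case
  proof (cases n)
    case 0 then show ?thesis by simp
  next
    case (Suc j)
    have "coeff (chebT (Suc (Suc j))) (Suc (Suc j)) = 2 * coeff (chebT (Suc j)) (Suc j) - coeff (chebT j) (Suc (Suc j))"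
      by (simp only: chebT.simps) (simp del: chebT.simps)
    also have "\<dots> = 2 ^ Suc j" using less Suc chebT_coeff_high[of j "Suc (Suc j)"] by simp
    finally show ?thesis using Suc by simp
  qed
qed

lemma coeff_pder: "coeff ((pderiv ^^ k) f) i = fact (i + k) / fact i * coeff (f :: real poly) (i + k)"
proof (induction k arbitrary: i)
  case 0 then show ?case by simp
next
  case (Suc k)
  have "coeff ((pderiv ^^ Suc k) f) i = real (Suc i) * coeff ((pderiv ^^ k) f) (Suc i)"
    by (simp add: coeff_pderiv)
  also have "\<dots> = real (Suc i) * (fact (Suc i + k) / fact (Suc i) * coeff f (Suc i + k))"
    using Suc by simp
  also have "\<dots> = fact (i + Suc k) / fact i * coeff f (i + Suc k)"
    by (simp add: fact_Suc field_simps del: of_nat_Suc)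
  finally show ?case .
qed

lemma chebT_coeff_rec:
  "real (Suc j) * real (Suc (Suc j)) * coeff (chebT n) (Suc (Suc j)) = (real j ^ 2 - real n ^ 2) * coeff (chebT n) j"
proof -
  let ?T = "chebT n"
  have m: "[:1,0,-1:] * P = P - [:0,1:] * ([:0,1:] * P)" for P :: "real poly"
    by (simp add: algebra_simps)
  have "coeff ([:1,0,-1:] * pderiv (pderiv ?T) - [:0,1:] * pderiv ?T + smult (real n ^ 2) ?T) j = 0"
    by (simp only: chebT_ode0 coeff_0)
  then have e: "coeff (pderiv (pderiv ?T)) j - coeff ([:0,1:] * ([:0,1:] * pderiv (pderiv ?T))) j
     - coeff ([:0,1:] * pderiv ?T) j + real n ^ 2 * coeff ?T j = 0"
    by (simp only: m coeff_add coeff_diff coeff_smult)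
  have a: "coeff ([:0,1:] * ([:0,1:] * pderiv (pderiv ?T))) j = real j * (real j - 1) * coeff ?T j"
  proof (cases j)
    case 0 then show ?thesis by (simp add: coeff_linmult)
  next
    case (Suc j') then show ?thesis
      by (cases j') (simp_all add: coeff_linmult coeff_pderiv algebra_simps)
  qed
  have b: "coeff ([:0,1:] * pderiv ?T) j = real j * coeff ?T j"
    by (cases j) (simp_all add: coeff_linmult coeff_pderiv)
  have c: "coeff (pderiv (pderiv ?T)) j = real (Suc j) * real (Suc (Suc j)) * coeff ?T (Suc (Suc j))"
    by (simp add: coeff_pderiv algebra_simps)
  from e a b c show ?thesis by (simp add: algebra_simps power2_eq_square)
qed

lemma chebT_pder_rec:
  "real (Suc i) * real (Suc (Suc i)) * coeff ((pderiv ^^ k) (chebT n)) (Suc (Suc i))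
     = ((real i + real k) ^ 2 - real n ^ 2) * coeff ((pderiv ^^ k) (chebT n)) i"
proof -
  let ?t = "coeff (chebT n)"
  have r: "real (Suc (i+k)) * real (Suc (Suc (i+k))) * ?t (Suc (Suc (i+k))) = (real (i+k) ^ 2 - real n ^ 2) * ?t (i+k)"
    by (rule chebT_coeff_rec)
  have f1: "fact (Suc (Suc (i+k))) = real (Suc (i+k)) * real (Suc (Suc (i+k))) * (fact (i+k) :: real)"
    by (simp add: fact_Suc algebra_simps del: of_nat_Suc)
  have f2: "fact (Suc (Suc i)) = real (Suc i) * real (Suc (Suc i)) * (fact i :: real)"
    by (simp add: fact_Suc algebra_simps del: of_nat_Suc)
  have "real (Suc i) * real (Suc (Suc i)) * coeff ((pderiv ^^ k) (chebT n)) (Suc (Suc i))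
     = real (Suc i) * real (Suc (Suc i)) * (fact (Suc (Suc (i+k))) / fact (Suc (Suc i)) * ?t (Suc (Suc (i+k))))"
    by (simp add: coeff_pder)
  also have "\<dots> = fact (i+k) / fact i * (real (Suc (i+k)) * real (Suc (Suc (i+k))) * ?t (Suc (Suc (i+k))))"
    unfolding f1 f2 by (simp add: field_simps del: of_nat_Suc)
  also have "\<dots> = ((real i + real k) ^ 2 - real n ^ 2) * coeff ((pderiv ^^ k) (chebT n)) i"
    unfolding r by (simp add: coeff_pder)
  finally show ?thesis .
qed



lemma poly_sum_le:
  fixes p :: "real poly"
  assumes "\<forall>i>m. coeff p i = 0"
  shows "poly p x = (\<Sum>i\<le>m. coeff p i * x ^ i)"
proof -
  have d: "degree p \<le> m" using assms by (intro degree_le) auto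
  have "poly p x = (\<Sum>i\<le>degree p. coeff p i * x ^ i)" by (rule poly_altdef)
  also have "\<dots> = (\<Sum>i\<le>m. coeff p i * x ^ i)"
    by (rule sum.mono_neutral_left) (use d assms le_degree in auto)
  finally show ?thesis .
qed

lemma poly_conv:
  fixes P :: "nat \<Rightarrow> real poly"
  assumes "\<forall>n i. m < i \<longrightarrow> coeff (P n) i = 0" "\<forall>i. m < i \<longrightarrow> coeff p i = 0"
    and "\<forall>i. (\<lambda>n. coeff (P n) i) \<longlonglongrightarrow> coeff p i"
    and "z \<longlonglongrightarrow> x"
  shows "(\<lambda>n. poly (P n) (z n)) \<longlonglongrightarrow> poly p x"
proof -
  have "(\<lambda>n. \<Sum>i\<le>m. coeff (P n) i * z n ^ i) \<longlonglongrightarrow> (\<Sum>i\<le>m. coeff p i * x ^ i)"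
    using assms(3,4) by (intro tendsto_intros) auto
  moreover have "poly (P n) (z n) = (\<Sum>i\<le>m. coeff (P n) i * z n ^ i)" for n
    using assms(1) by (intro poly_sum_le) auto
  moreover have "poly p x = (\<Sum>i\<le>m. coeff p i * x ^ i)"
    using assms(2) by (intro poly_sum_le) auto
  ultimately show ?thesis by simp
qed

lemma unif_conv:
  fixes P :: "nat \<Rightarrow> real poly"
  assumes hi: "\<forall>n i. m < i \<longrightarrow> coeff (P n) i = 0" "\<forall>i. m < i \<longrightarrow> coeff p i = 0"
    and conv: "\<forall>i. (\<lambda>n. coeff (P n) i) \<longlonglongrightarrow> coeff p i"
    and e: "e > 0"
  shows "eventually (\<lambda>n. \<forall>y. \<bar>y\<bar> \<le> R \<longrightarrow> \<bar>poly (P n) y - poly p y\<bar> < e) sequentially"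
proof -
  define E where "E n = (\<Sum>i\<le>m. \<bar>coeff (P n) i - coeff p i\<bar> * \<bar>R\<bar> ^ i)" for n
  have "E \<longlonglongrightarrow> (\<Sum>i\<le>m. \<bar>coeff p i - coeff p i\<bar> * \<bar>R\<bar> ^ i)"
    unfolding E_def using conv by (intro tendsto_intros) auto
  then have "E \<longlonglongrightarrow> 0" by simp
  then have ev: "eventually (\<lambda>n. E n < e) sequentially" using e by (rule order_tendstoD(2))
  show ?thesis
  proof (rule eventually_mono[OF ev], intro allI impI)
    fix n y assume En: "E n < e" and y: "\<bar>y\<bar> \<le> R"
    have "poly (P n) y - poly p y = (\<Sum>i\<le>m. (coeff (P n) i - coeff p i) * y ^ i)"
      using poly_sum_le[of m "P n" y] poly_sum_le[of m p y] hi by (simp add: sum_subtractf algebra_simps)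
    then have "\<bar>poly (P n) y - poly p y\<bar> \<le> (\<Sum>i\<le>m. \<bar>(coeff (P n) i - coeff p i) * y ^ i\<bar>)"
      by (simp add: sum_abs)
    also have "\<dots> \<le> E n" unfolding E_def
    proof (rule sum_mono)
      fix i assume "i \<in> {..m}"
      have "\<bar>y\<bar> ^ i \<le> \<bar>R\<bar> ^ i" using y by (intro power_mono) auto
      then show "\<bar>(coeff (P n) i - coeff p i) * y ^ i\<bar> \<le> \<bar>coeff (P n) i - coeff p i\<bar> * \<bar>R\<bar> ^ i"
        by (simp add: abs_mult power_abs mult_left_mono)
    qed
    finally show "\<bar>poly (P n) y - poly p y\<bar> < e" using En by simp
  qed
qed

lemma pos_beyond':
  fixes p :: "real poly"
  assumes lc: "lead_coeff p > 0" and rt: "\<forall>y. poly p y = 0 \<longrightarrow> y \<le> r" and ry: "r < y"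
  shows "poly p y > 0"
proof (rule ccontr)
  assume neg: "\<not> poly p y > 0"
  obtain N where N: "\<forall>x\<ge>N. lead_coeff p \<le> poly p x" using poly_pinfty_gt_lc[OF lc] by blast
  define Y where "Y = max N (y + 1)"
  have pY: "poly p Y > 0" using N[rule_format, of Y] lc unfolding Y_def by simp
  have yY: "y < Y" unfolding Y_def by simp
  show False
  proof (cases "poly p y = 0")
    case True then show False using rt ry by force
  next
    case False
    then have "poly p y < 0" using neg by simp
    from poly_IVT_pos[OF yY this pY] obtain x where "x > y" "poly p x = 0" by blast
    then show False using rt ry by force
  qed
qed

lemma main_conv:
  fixes Q :: "nat \<Rightarrow> real poly" and h :: "real poly" and d :: nat and x0 :: real
  assumes Qtop: "\<forall>n. coeff (Q n) (Suc (Suc d)) = 1"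
    and Qhi: "\<forall>n i. Suc (Suc d) < i \<longrightarrow> coeff (Q n) i = 0"
    and conv: "\<forall>i. (\<lambda>n. coeff (Q n) i) \<longlonglongrightarrow> coeff h i"
    and x0: "poly (pderiv h) x0 = 0" and x0max: "\<forall>y. poly (pderiv h) y = 0 \<longrightarrow> y \<le> x0"
    and simple: "\<forall>y. poly (pderiv h) y = 0 \<longrightarrow> poly (pderiv (pderiv h)) y \<noteq> 0"
  shows "eventually (\<lambda>n. finite {y. poly (pderiv (Q n)) y = 0} \<and> {y. poly (pderiv (Q n)) y = 0} \<noteq> {}) sequentially
     \<and> (\<lambda>n. poly (Q n) (Max {y. poly (pderiv (Q n)) y = 0})) \<longlonglongrightarrow> poly h x0"
proof -
  define m where "m = Suc (Suc d)"
  define G where "G n = pderiv (Q n)" for n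
  define g where "g = pderiv h"
  define Z where "Z n = {y. poly (G n) y = 0}" for n
  have htop: "coeff h m = 1"
  proof -
    have "(\<lambda>n. coeff (Q n) m) \<longlonglongrightarrow> coeff h m" using conv by simp
    moreover have "(\<lambda>n. coeff (Q n) m) = (\<lambda>n. 1)" using Qtop unfolding m_def by simp
    ultimately show ?thesis using LIMSEQ_unique[OF tendsto_const] by metis
  qed
  have hhi: "coeff h i = 0" if "m < i" for i
  proof -
    have "(\<lambda>n. coeff (Q n) i) \<longlonglongrightarrow> coeff h i" using conv by simp
    moreover have "(\<lambda>n. coeff (Q n) i) = (\<lambda>n. 0)" using Qhi that unfolding m_def by simp
    ultimately show ?thesis using LIMSEQ_unique[OF tendsto_const] by metis
  qed
  have Ghi: "\<forall>n i. Suc d < i \<longrightarrow> coeff (G n) i = 0" using Qhi unfolding G_def by (simp add: coeff_pderiv)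
  have Gtop: "coeff (G n) (Suc d) = real m" for n using Qtop unfolding G_def m_def by (simp add: coeff_pderiv)
  have ghi: "\<forall>i. Suc d < i \<longrightarrow> coeff g i = 0" using hhi unfolding g_def m_def by (simp add: coeff_pderiv)
  have gtop: "coeff g (Suc d) = real m" using htop unfolding g_def m_def by (simp add: coeff_pderiv)
  have Gconv: "\<forall>i. (\<lambda>n. coeff (G n) i) \<longlonglongrightarrow> coeff g i"
    unfolding G_def g_def coeff_pderiv using conv by (auto intro!: tendsto_intros)
  have gdeg: "degree g = Suc d"
    using ghi gtop unfolding m_def by (intro antisym degree_le le_degree) auto
  have glc: "lead_coeff g > 0" using gdeg gtop unfolding m_def by simp
  have gx0: "poly g x0 = 0" using x0 unfolding g_def .
  have gmax: "\<forall>y. poly g y = 0 \<longrightarrow> y \<le> x0" using x0max unfolding g_def .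
  have gpos: "poly g y > 0" if "y > x0" for y using pos_beyond'[OF glc gmax that] .
  have Gnz: "G n \<noteq> 0" for n using Gtop[of n] unfolding m_def by auto
  have Zfin: "finite (Z n)" for n unfolding Z_def using poly_roots_finite[OF Gnz] .
  define B where "B = (\<Sum>i\<le>d. \<bar>coeff g i\<bar> + 1)"
  have evB: "eventually (\<lambda>n. \<forall>i\<in>{..d}. \<bar>coeff (G n) i\<bar> < \<bar>coeff g i\<bar> + 1) sequentially"
  proof (rule eventually_ball_finite, simp, intro ballI)
    fix i
    have "(\<lambda>n. \<bar>coeff (G n) i\<bar>) \<longlonglongrightarrow> \<bar>coeff g i\<bar>" using Gconv by (intro tendsto_intros) auto
    then show "eventually (\<lambda>n. \<bar>coeff (G n) i\<bar> < \<bar>coeff g i\<bar> + 1) sequentially"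
      by (rule order_tendstoD(2)) simp
  qed
  have stepB: "eventually (\<lambda>n. \<forall>y\<ge>B + 1. poly (G n) y > 0) sequentially"
  proof (rule eventually_mono[OF evB], intro allI impI)
    fix n y assume bnd: "\<forall>i\<in>{..d}. \<bar>coeff (G n) i\<bar> < \<bar>coeff g i\<bar> + 1" and y: "B + 1 \<le> y"
    have B0: "B \<ge> 0" unfolding B_def by (intro sum_nonneg) auto
    have y1: "y \<ge> 1" using y B0 by simp
    have "poly (G n) y = (\<Sum>i\<le>Suc d. coeff (G n) i * y ^ i)" using Ghi by (intro poly_sum_le) auto
    also have "\<dots> = (\<Sum>i\<le>d. coeff (G n) i * y ^ i) + real m * y ^ Suc d" by (simp add: Gtop)
    finally have eq: "poly (G n) y = (\<Sum>i\<le>d. coeff (G n) i * y ^ i) + real m * y ^ Suc d" .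
    have "\<bar>\<Sum>i\<le>d. coeff (G n) i * y ^ i\<bar> \<le> (\<Sum>i\<le>d. \<bar>coeff (G n) i * y ^ i\<bar>)" by (rule sum_abs)
    also have "\<dots> \<le> (\<Sum>i\<le>d. (\<bar>coeff g i\<bar> + 1) * y ^ d)"
    proof (rule sum_mono)
      fix i assume i: "i \<in> {..d}"
      have "y ^ i \<le> y ^ d" using y1 i by (intro power_increasing) auto
      moreover have "\<bar>coeff (G n) i\<bar> \<le> \<bar>coeff g i\<bar> + 1" using bnd i by force
      ultimately show "\<bar>coeff (G n) i * y ^ i\<bar> \<le> (\<bar>coeff g i\<bar> + 1) * y ^ d"
        using y1 by (simp add: abs_mult mult_mono)
    qed
    also have "\<dots> = B * y ^ d" unfolding B_def by (simp add: sum_distrib_right)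
    finally have s: "\<bar>\<Sum>i\<le>d. coeff (G n) i * y ^ i\<bar> \<le> B * y ^ d" .
    have yd: "y ^ d > 0" using y1 by simp
    have "B * y ^ d < y * y ^ d" using y yd by (intro mult_strict_right_mono) auto
    also have "\<dots> \<le> real m * y ^ Suc d" using yd y1 unfolding m_def by (simp add: mult_right_mono)
    finally show "poly (G n) y > 0" using eq s by linarith
  qed
  have stepA: "eventually (\<lambda>n. \<forall>y\<ge>x0 + e. poly (G n) y > 0) sequentially" if e: "e > 0" for e
  proof (cases "B + 1 \<le> x0 + e")
    case True
    then show ?thesis by (rule_tac eventually_mono[OF stepB]) auto
  next
    case False
    define a where "a = x0 + e"
    have "compact {a..B+1}" by simp
    moreover have "{a..B+1} \<noteq> {}" using False unfolding a_def by simp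
    moreover have "continuous_on {a..B+1} (poly g)" by (intro continuous_intros)
    ultimately obtain s where s: "s \<in> {a..B+1}" "\<forall>y\<in>{a..B+1}. poly g s \<le> poly g y"
      using continuous_attains_inf by blast
    have dpos: "poly g s > 0" using s(1) e unfolding a_def by (intro gpos) auto
    have evU: "eventually (\<lambda>n. \<forall>y. \<bar>y\<bar> \<le> \<bar>a\<bar> + \<bar>B+1\<bar> \<longrightarrow> \<bar>poly (G n) y - poly g y\<bar> < poly g s) sequentially"
      using Ghi ghi Gconv dpos by (intro unif_conv) auto
    show ?thesis
    proof (rule eventually_mono[OF eventually_conj[OF evU stepB]], intro allI impI)
      fix n y assume H: "(\<forall>y. \<bar>y\<bar> \<le> \<bar>a\<bar> + \<bar>B+1\<bar> \<longrightarrow> \<bar>poly (G n) y - poly g y\<bar> < poly g s) \<and> (\<forall>y\<ge>B + 1. poly (G n) y > 0)"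
        and y: "x0 + e \<le> y"
      show "poly (G n) y > 0"
      proof (cases "B + 1 \<le> y")
        case True then show ?thesis using H by auto
      next
        case False
        then have yi: "y \<in> {a..B+1}" using y unfolding a_def by auto
        then have "\<bar>y\<bar> \<le> \<bar>a\<bar> + \<bar>B+1\<bar>" by auto
        then have "\<bar>poly (G n) y - poly g y\<bar> < poly g s" using H by blast
        moreover have "poly g s \<le> poly g y" using s yi by blast
        ultimately show ?thesis by linarith
      qed
    qed
  qed
  have gd0: "poly (pderiv g) x0 \<ge> 0"
  proof (rule ccontr)
    assume "\<not> poly (pderiv g) x0 \<ge> 0"
    then have "poly (pderiv g) x0 < 0" by simp
    from DERIV_neg_dec_right[OF poly_DERIV this] obtain dd where dd: "dd > 0" "\<forall>h>0. h < dd \<longrightarrow> poly g (x0 + h) < poly g x0" by blast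
    then have "poly g (x0 + dd/2) < 0" using gx0 by auto
    moreover have "poly g (x0 + dd/2) > 0" using gpos dd by auto
    ultimately show False by simp
  qed
  have gd: "poly (pderiv g) x0 > 0" using gd0 simple x0 unfolding g_def by force
  from DERIV_pos_inc_left[OF poly_DERIV gd] obtain dd where dd: "dd > 0" "\<forall>h>0. h < dd \<longrightarrow> poly g (x0 - h) < poly g x0" by blast
  have lower: "eventually (\<lambda>n. \<exists>z. x0 - e < z \<and> poly (G n) z = 0) sequentially" if e: "e > 0" for e
  proof -
    define h0 where "h0 = min (dd/2) (e/2)"
    have h0: "h0 > 0" "h0 < dd" "h0 < e" using dd e unfolding h0_def by auto
    have neg: "poly g (x0 - h0) < 0" using dd h0 gx0 by auto
    have pos: "poly g (x0 + 1) > 0" using gpos by simp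
    have c1: "(\<lambda>n. poly (G n) (x0 - h0)) \<longlonglongrightarrow> poly g (x0 - h0)"
      using Ghi ghi Gconv by (intro poly_conv) auto
    have c2: "(\<lambda>n. poly (G n) (x0 + 1)) \<longlonglongrightarrow> poly g (x0 + 1)"
      using Ghi ghi Gconv by (intro poly_conv) auto
    have e1: "eventually (\<lambda>n. poly (G n) (x0 - h0) < 0) sequentially" using order_tendstoD(2)[OF c1 neg] .
    have e2: "eventually (\<lambda>n. poly (G n) (x0 + 1) > 0) sequentially" using order_tendstoD(1)[OF c2 pos] .
    show ?thesis
    proof (rule eventually_mono[OF eventually_conj[OF e1 e2]])
      fix n assume H: "poly (G n) (x0 - h0) < 0 \<and> poly (G n) (x0 + 1) > 0"
      have "x0 - h0 < x0 + 1" using h0 by simp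
      from poly_IVT_pos[OF this] H obtain z where "z > x0 - h0" "poly (G n) z = 0" by blast
      then show "\<exists>z. x0 - e < z \<and> poly (G n) z = 0" using h0 by (intro exI[of _ z]) auto
    qed
  qed
  have ne: "eventually (\<lambda>n. Z n \<noteq> {}) sequentially"
    using lower[of 1] by (rule eventually_mono) (auto simp: Z_def)
  have Zconv: "(\<lambda>n. Max (Z n)) \<longlonglongrightarrow> x0"
  proof (rule tendstoI)
    fix e :: real assume e: "e > 0"
    show "eventually (\<lambda>n. dist (Max (Z n)) x0 < e) sequentially"
    proof (rule eventually_mono[OF eventually_conj[OF lower[OF e] stepA[OF e]]])
      fix n assume H: "(\<exists>z. x0 - e < z \<and> poly (G n) z = 0) \<and> (\<forall>y\<ge>x0 + e. poly (G n) y > 0)"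
      then obtain z where z: "x0 - e < z" "z \<in> Z n" unfolding Z_def by auto
      have "z \<le> Max (Z n)" using Max_ge[OF Zfin z(2)] .
      moreover have "Max (Z n) \<in> Z n" using Max_in[OF Zfin] z(2) by auto
      then have "poly (G n) (Max (Z n)) = 0" unfolding Z_def by simp
      then have "Max (Z n) < x0 + e"
      proof -
        assume r: "poly (G n) (Max (Z n)) = 0"
        show ?thesis
        proof (rule ccontr)
          assume "\<not> Max (Z n) < x0 + e"
          then have "poly (G n) (Max (Z n)) > 0" using H by auto
          then show False using r by simp
        qed
      qed
      ultimately show "dist (Max (Z n)) x0 < e" using z unfolding dist_real_def by auto
    qed
  qed
  have "(\<lambda>n. poly (Q n) (Max (Z n))) \<longlonglongrightarrow> poly h x0"
    using Qhi hhi conv Zconv unfolding m_def by (intro poly_conv[where m = m]) (auto simp: m_def)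
  moreover have "eventually (\<lambda>n. finite (Z n) \<and> Z n \<noteq> {}) sequentially"
    using ne Zfin by (auto elim: eventually_mono)
  ultimately show ?thesis unfolding Z_def G_def by simp
qed


lemma powr_sqrt: "0 < n \<Longrightarrow> real n powr (real m / 2) = sqrt (real n) ^ m"
proof -
  assume n: "0 < n"
  have "sqrt (real n) ^ m = (real n powr (1/2)) ^ m" by (simp add: powr_half_sqrt)
  also have "\<dots> = (real n powr (1/2)) powr (real m)" using n by (simp add: powr_realpow)
  also have "\<dots> = real n powr (real m / 2)" by (simp add: powr_powr)
  finally show ?thesis by simp
qed


lemma one_over_sqrt: "(\<lambda>n. 1 / sqrt (real n)) \<longlonglongrightarrow> 0"
proof -
  have "(\<lambda>n. sqrt (1 / real n)) \<longlonglongrightarrow> sqrt 0" by (intro tendsto_intros lim_1_over_n)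
  then show ?thesis by (simp add: real_sqrt_divide)
qed

lemma ratio_lim:
  fixes a :: real
  assumes "a \<noteq> 0"
  shows "(\<lambda>n. real n / (a * (2 * real n + a))) \<longlonglongrightarrow> 1 / (2 * a)"
proof -
  have "(\<lambda>n. 1 / (a * (2 + a / real n))) \<longlonglongrightarrow> 1 / (a * (2 + 0))"
    using assms by (intro tendsto_intros lim_const_over_n) auto
  moreover have "eventually (\<lambda>n. 1 / (a * (2 + a / real n)) = real n / (a * (2 * real n + a))) sequentially"
    using eventually_gt_at_top[of 0]
    by (rule eventually_mono) (simp add: field_simps)
  ultimately show ?thesis using Lim_transform_eventually by (simp add: mult.commute)
qed

theorem lemma6p4:
  fixes m :: nat
  assumes "m \<ge> 2"
  shows "(\<lambda>n. real n powr (real m / 2) * cheb_tau n (n - m))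
           \<longlonglongrightarrow> \<bar>poly (hermite m) (hermite_xprime m)\<bar> / 2 ^ m"
proof -
  define d where "d = m - 2"
  have m: "m = Suc (Suc d)" using assms unfolding d_def by simp
  define h where "h = smult (1 / 2 ^ m) (hermite m)"
  define S where "S = {x. poly (pderiv (hermite m)) x = 0}"
  define x0 where "x0 = hermite_xprime m"
  have dH: "pderiv (hermite m) = smult (2 * real m) (hermite (Suc d))"
    using hermite_pderiv[of "Suc d"] m by simp
  have dH2: "pderiv (pderiv (hermite m)) = smult (2 * real m * (2 * real (Suc d))) (hermite d)"
    unfolding dH pderiv_smult hermite_pderiv by simp
  have Sfin: "finite S" unfolding S_def dH using hermite_nonzero[of "Suc d"] m
    by (intro poly_roots_finite) simp
  have Sne: "S \<noteq> {}" unfolding S_def dH using hermite_has_root[of "Suc d"] m by auto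
  have x0S: "x0 \<in> S" unfolding x0_def hermite_xprime_def S_def[symmetric] using Max_in[OF Sfin Sne] .
  have x0max: "\<forall>y\<in>S. y \<le> x0" unfolding x0_def hermite_xprime_def S_def[symmetric] using Max_ge[OF Sfin] by blast
  have hd: "pderiv h = smult (1 / 2 ^ m) (pderiv (hermite m))" unfolding h_def pderiv_smult ..
  have hroots: "poly (pderiv h) y = 0 \<longleftrightarrow> y \<in> S" for y unfolding hd S_def by simp
  have hsimple: "\<forall>y. poly (pderiv h) y = 0 \<longrightarrow> poly (pderiv (pderiv h)) y \<noteq> 0"
  proof (intro allI impI)
    fix y assume "poly (pderiv h) y = 0"
    then have "poly (hermite (Suc d)) y = 0" using hroots[of y] unfolding S_def dH using m by simp
    then have "poly (hermite d) y \<noteq> 0" using hermite_no_common_root[of d y] by blast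
    then show "poly (pderiv (pderiv h)) y \<noteq> 0" unfolding hd pderiv_smult dH2 using m by simp
  qed
  define p where "p n = (pderiv ^^ (n - m)) (chebT n)" for n
  define c where "c n = coeff (p n) m" for n
  define s where "s n = sqrt (real n)" for n
  define Q where "Q n = (if n \<le> m then monom 1 m else smult (s n ^ m / c n) (p n \<circ>\<^sub>p [:0, 1 / s n:]))" for n
  have cpos: "c n > 0" if nn: "m < n" for n
  proof -
    have "c n = fact n / fact m * coeff (chebT n) n" unfolding c_def p_def coeff_pder using nn by simp
    moreover obtain n' where "n = Suc n'" using nn by (cases n) auto
    ultimately show ?thesis using chebT_coeff_top[of n'] by simp
  qed
  have phi: "coeff (p n) i = 0" if "m < i" "m < n" for n i
    unfolding p_def coeff_pder using that chebT_coeff_high[of n "i + (n - m)"] by simp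
  have spos: "s n > 0" if "m < n" for n unfolding s_def using that by simp
  have Qc: "coeff (Q n) i = s n ^ m / c n * (1 / s n) ^ i * coeff (p n) i" if "m < n" for n i
    unfolding Q_def using that by (simp add: coeff_pcompose_linear)
  have Qtop: "\<forall>n. coeff (Q n) (Suc (Suc d)) = 1"
  proof
    fix n show "coeff (Q n) (Suc (Suc d)) = 1"
    proof (cases "n \<le> m")
      case True then show ?thesis unfolding Q_def m by simp
    next
      case False
      then have "m < n" by simp
      then show ?thesis using Qc[of n m] cpos[of n] spos[of n] unfolding c_def[symmetric] m[symmetric]
        by (simp add: power_one_over field_simps)
    qed
  qed
  have Qhi: "\<forall>n i. Suc (Suc d) < i \<longrightarrow> coeff (Q n) i = 0"
  proof (intro allI impI)
    fix n i assume i: "Suc (Suc d) < i"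
    show "coeff (Q n) i = 0"
    proof (cases "n \<le> m")
      case True then show ?thesis unfolding Q_def using i m by (simp add: coeff_monom)
    next
      case False then show ?thesis using Qc[of n i] phi[of i n] i m by simp
    qed
  qed
  have hhi: "coeff h i = 0" if "m < i" for i unfolding h_def using hermite_coeff_high[OF that] by simp
  have htop: "coeff h m = 1" unfolding h_def using hermite_coeff_top[of m] by simp
  have conv: "\<forall>i. (\<lambda>n. coeff (Q n) i) \<longlonglongrightarrow> coeff h i"
  proof
    fix i show "(\<lambda>n. coeff (Q n) i) \<longlonglongrightarrow> coeff h i"
    proof (induction "m - i" arbitrary: i rule: less_induct)
      case less
      show ?case
      proof (cases "m \<le> i")
        case True
        show ?thesis
        proof (cases "i = m")
          case True
          then show ?thesis using Qtop htop m by simp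
        next
          case False
          then have "m < i" using \<open>m \<le> i\<close> by simp
          then show ?thesis using Qhi hhi m by simp
        qed
      next
        case False
        then have im: "i < m" by simp
        have IH: "(\<lambda>n. coeff (Q n) (Suc (Suc i))) \<longlonglongrightarrow> coeff h (Suc (Suc i))"
          using less im by simp
        define a where "a = real i - real m"
        have a0: "a \<noteq> 0" using im unfolding a_def by simp
        have lim: "(\<lambda>n. real (Suc i) * real (Suc (Suc i)) * (real n / (a * (2 * real n + a))) * coeff (Q n) (Suc (Suc i)))
             \<longlonglongrightarrow> real (Suc i) * real (Suc (Suc i)) * (1 / (2 * a)) * coeff h (Suc (Suc i))"
          by (intro tendsto_intros ratio_lim a0 IH)
        have hrec: "coeff h i = real (Suc i) * real (Suc (Suc i)) * (1 / (2 * a)) * coeff h (Suc (Suc i))"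
        proof -
          have r: "real (Suc i) * real (Suc (Suc i)) * coeff (hermite m) (Suc (Suc i)) = 2 * a * coeff (hermite m) i"
            using hermite_coeff_rec[of i m] unfolding a_def by simp
          have "coeff (hermite m) i = real (Suc i) * real (Suc (Suc i)) * coeff (hermite m) (Suc (Suc i)) / (2 * a)"
            using a0 r by (simp add: field_simps)
          then show ?thesis unfolding h_def coeff_smult by simp
        qed
        have ev: "eventually (\<lambda>n. real (Suc i) * real (Suc (Suc i)) * (real n / (a * (2 * real n + a))) * coeff (Q n) (Suc (Suc i))
             = coeff (Q n) i) sequentially"
          using eventually_gt_at_top[of m]
        proof (rule eventually_mono)
          fix n assume n: "m < n"
          define k where "k = n - m"
          have nk: "real n = real k + real m" unfolding k_def using n by simp
          have D: "(real i + real k) ^ 2 - real n ^ 2 = a * (2 * real n + a)"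
            unfolding nk a_def by (simp add: power2_eq_square algebra_simps)
          have Dnz: "a * (2 * real n + a) \<noteq> 0" using a0 n unfolding a_def
            by (simp add: nk)
          have r: "real (Suc i) * real (Suc (Suc i)) * coeff (p n) (Suc (Suc i)) = a * (2 * real n + a) * coeff (p n) i"
            using chebT_pder_rec[of i k n] D unfolding p_def k_def by simp
          have sn: "s n * s n = real n" unfolding s_def by simp
          have cn: "c n \<noteq> 0" using cpos[OF n] by simp
          have sn0: "s n \<noteq> 0" using spos[OF n] by simp
          show "real (Suc i) * real (Suc (Suc i)) * (real n / (a * (2 * real n + a))) * coeff (Q n) (Suc (Suc i)) = coeff (Q n) i"
          proof -
            define A where "A = s n ^ m / c n"
            define D where "D = a * (2 * real n + a)"
            have "real (Suc i) * real (Suc (Suc i)) * (real n / D) * coeff (Q n) (Suc (Suc i))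
                = (real n / D) * (A * (1 / s n) ^ Suc (Suc i)) * (real (Suc i) * real (Suc (Suc i)) * coeff (p n) (Suc (Suc i)))"
              unfolding Qc[OF n] A_def by (simp only: mult_ac)
            also have "\<dots> = (real n / D) * (A * (1 / s n) ^ Suc (Suc i)) * (D * coeff (p n) i)"
              using r unfolding D_def by simp
            also have "\<dots> = real n * (A * (1 / s n) ^ Suc (Suc i)) * coeff (p n) i"
              using Dnz unfolding D_def[symmetric] by simp
            also have "\<dots> = (real n * ((1 / s n) * (1 / s n))) * (A * (1 / s n) ^ i * coeff (p n) i)"
              by (simp only: power_Suc mult_ac)
            also have "real n * ((1 / s n) * (1 / s n)) = 1" using sn sn0 n by (simp add: field_simps)
            finally show ?thesis unfolding Qc[OF n] A_def D_def by simp
          qed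
        qed
        show ?thesis using Lim_transform_eventually[OF lim ev] hrec by simp
      qed
    qed
  qed
  have x0r: "poly (pderiv h) x0 = 0" using hroots x0S by simp
  have x0m: "\<forall>y. poly (pderiv h) y = 0 \<longrightarrow> y \<le> x0" using hroots x0max by simp
  from main_conv[OF Qtop Qhi conv x0r x0m hsimple]
  have evZ: "eventually (\<lambda>n. finite {y. poly (pderiv (Q n)) y = 0} \<and> {y. poly (pderiv (Q n)) y = 0} \<noteq> {}) sequentially"
    and L1: "(\<lambda>n. poly (Q n) (Max {y. poly (pderiv (Q n)) y = 0})) \<longlonglongrightarrow> poly h x0" by blast+
  have L2: "(\<lambda>n. poly (p n) 1 / c n) \<longlonglongrightarrow> 1"
  proof -
    have "(\<lambda>n. \<Sum>i\<le>m. coeff (Q n) i * (1 / s n) ^ (m - i)) \<longlonglongrightarrow> (\<Sum>i\<le>m. coeff h i * 0 ^ (m - i))"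
      using conv one_over_sqrt unfolding s_def by (intro tendsto_intros) auto
    also have "(\<Sum>i\<le>m. coeff h i * 0 ^ (m - i)) = (\<Sum>i\<le>m. if i = m then coeff h i else 0)"
      by (intro sum.cong) auto
    also have "\<dots> = 1" using htop by simp
    finally have lim: "(\<lambda>n. \<Sum>i\<le>m. coeff (Q n) i * (1 / s n) ^ (m - i)) \<longlonglongrightarrow> 1" .
    have ev: "eventually (\<lambda>n. (\<Sum>i\<le>m. coeff (Q n) i * (1 / s n) ^ (m - i)) = poly (p n) 1 / c n) sequentially"
      using eventually_gt_at_top[of m]
    proof (rule eventually_mono)
      fix n assume n: "m < n"
      have "poly (p n) 1 = (\<Sum>i\<le>m. coeff (p n) i * 1 ^ i)" using phi n by (intro poly_sum_le) auto
      then have "poly (p n) 1 / c n = (\<Sum>i\<le>m. coeff (p n) i / c n)" by (simp add: sum_divide_distrib)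
      also have "\<dots> = (\<Sum>i\<le>m. coeff (Q n) i * (1 / s n) ^ (m - i))"
      proof (intro sum.cong refl)
        fix i assume i: "i \<in> {..m}"
        have "(1 / s n) ^ i * (1 / s n) ^ (m - i) = (1 / s n) ^ m" using i by (simp add: power_add[symmetric])
        then have "s n ^ m * ((1 / s n) ^ i * (1 / s n) ^ (m - i)) = 1" using spos[OF n]
          by (simp add: power_one_over)
        then show "coeff (p n) i / c n = coeff (Q n) i * (1 / s n) ^ (m - i)"
          using spos[OF n] cpos[OF n] unfolding Qc[OF n] by (simp add: mult_ac)
      qed
      finally show "(\<Sum>i\<le>m. coeff (Q n) i * (1 / s n) ^ (m - i)) = poly (p n) 1 / c n" by simp
    qed
    show ?thesis using Lim_transform_eventually[OF lim ev] .
  qed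
  define Z where "Z n = {y. poly (pderiv (Q n)) y = 0}" for n
  have L3: "(\<lambda>n. \<bar>poly (Q n) (Max (Z n))\<bar> / (poly (p n) 1 / c n)) \<longlonglongrightarrow> \<bar>poly h x0\<bar> / 1"
    using L1 L2 unfolding Z_def by (intro tendsto_intros) auto
  have ev: "eventually (\<lambda>n. \<bar>poly (Q n) (Max (Z n))\<bar> / (poly (p n) 1 / c n) = real n powr (real m / 2) * cheb_tau n (n - m)) sequentially"
    using eventually_conj[OF evZ eventually_gt_at_top[of m]]
  proof (rule eventually_mono)
    fix n assume H: "(finite {y. poly (pderiv (Q n)) y = 0} \<and> {y. poly (pderiv (Q n)) y = 0} \<noteq> {}) \<and> m < n"
    then have n: "m < n" and Zf: "finite (Z n)" and Zne: "Z n \<noteq> {}" unfolding Z_def by auto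
    define A where "A = s n ^ m / c n"
    have A0: "A > 0" unfolding A_def using cpos[OF n] spos[OF n] by simp
    have sn0: "s n > 0" using spos[OF n] .
    have Qn: "Q n = smult A (p n \<circ>\<^sub>p [:0, 1 / s n:])" unfolding Q_def A_def using n by simp
    have polyQ: "poly (Q n) y = A * poly (p n) (y / s n)" for y unfolding Qn by (simp add: poly_pcompose)
    have polyQ': "poly (pderiv (Q n)) y = A * poly (pderiv (p n)) (y / s n) * (1 / s n)" for y
      unfolding Qn pderiv_smult pderiv_pcompose by (simp add: poly_pcompose pderiv_pCons)
    define W where "W = {x. poly (pderiv (p n)) x = 0}"
    have ZW: "Z n = {y. poly (pderiv (p n)) (y / s n) = 0}" unfolding Z_def polyQ' using A0 sn0 by simp
    have WZ: "W = (\<lambda>y. y / s n) ` Z n"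
    proof
      show "W \<subseteq> (\<lambda>y. y / s n) ` Z n"
      proof
        fix x assume "x \<in> W"
        then have "x * s n \<in> Z n" unfolding ZW W_def using sn0 by simp
        moreover have "x = (x * s n) / s n" using sn0 by simp
        ultimately show "x \<in> (\<lambda>y. y / s n) ` Z n" by blast
      qed
    next
      show "(\<lambda>y. y / s n) ` Z n \<subseteq> W" unfolding ZW W_def by auto
    qed
    have mono: "mono (\<lambda>y. y / s n)" using sn0 by (auto simp: mono_def divide_right_mono)
    have MW: "Max W = Max (Z n) / s n" unfolding WZ using mono_Max_commute[OF mono Zf Zne] by simp
    have om: "cheb_omega n (n - m) = Max W"
      unfolding cheb_omega_def pder_def W_def p_def using n by (simp add: Suc_diff_le)
    have tau: "cheb_tau n (n - m) = \<bar>poly (p n) (Max W)\<bar> / poly (p n) 1"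
      unfolding cheb_tau_def om unfolding pder_def p_def ..
    have pw: "real n powr (real m / 2) = s n ^ m" unfolding s_def using n by (intro powr_sqrt) simp
    show "\<bar>poly (Q n) (Max (Z n))\<bar> / (poly (p n) 1 / c n) = real n powr (real m / 2) * cheb_tau n (n - m)"
    proof -
      have c0: "c n > 0" using cpos[OF n] .
      have "\<bar>poly (Q n) (Max (Z n))\<bar> / (poly (p n) 1 / c n) = (A * \<bar>poly (p n) (Max W)\<bar>) * c n / poly (p n) 1"
        unfolding polyQ MW[symmetric] using A0 by (simp add: abs_mult)
      also have "\<dots> = (A * c n) * (\<bar>poly (p n) (Max W)\<bar> / poly (p n) 1)" by simp
      also have "A * c n = s n ^ m" unfolding A_def using c0 by simp
      finally show ?thesis unfolding tau pw .
    qed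
  qed
  have "(\<lambda>n. real n powr (real m / 2) * cheb_tau n (n - m)) \<longlonglongrightarrow> \<bar>poly h x0\<bar> / 1"
    using Lim_transform_eventually[OF L3 ev] .
  moreover have "\<bar>poly h x0\<bar> / 1 = \<bar>poly (hermite m) (hermite_xprime m)\<bar> / 2 ^ m"
    unfolding h_def x0_def by (simp add: abs_mult)
  ultimately show ?thesis by simp
qed


end
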